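(* Let $\mathfrak g$ be a complex finite-dimensional simple Lie algebra with simple roots $\alpha_1,\dots,\alpha_n$ and Cartan matrix $a_{ij}=2(\alpha_i,\alpha_j)/(\alpha_i,\alpha_i)$. If $m$ is a real symmetric $n\times n$ matrix with $2m_{ij}=a_{ij}m_{ii}$ for all $i\neq j$ (all simple roots $m$-Cartan), then there is $r\in\mathbb R$ with $m_{ij}=r(\alpha_i,\alpha_j)$ for all $i,j$. In particular, if $q$ is a primitive $\ell$-th root of unity, $q_{ij}=q^{(\alpha_i,\alpha_j)}$, $\ell_i:=\ell/\gcd(\ell,(\alpha_i,\alpha_i))$ satisfies $\ell_i>1-a_{ij}$ for all $i\neq j$, and $m$ realises $q$, then $m_{ij}=r(\alpha_i,\alpha_j)$ for some $r\in\mathbb R$.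
   Context: $m$ realises $q$ means: $e^{i\pi m_{ij}}=q_{ij}$ for all $i,j$, and for every pair $i\ne j$ either (A) $2m_{ij}=a_{ij}m_{ii}$ or (B) $(1-a_{ij})m_{ii}=2$ holds, where $a$ is the Cartan matrix of the braiding (here equal to that of $\mathfrak g$), and the same holds after any finite sequence of Weyl groupoid reflections $\mathcal R^k:\alpha_i\mapsto\alpha_i-a_{ki}\alpha_k$ applied simultaneously to $m$ (as a bilinear form) and $q$ (as a bicharacter). *)

theory Defs
  imports Complex_Main
begin

text \<open>Simple roots of a complex finite-dimensional simple Lie algebra, given by the
Gram matrix B i j = (alpha_i, alpha_j) of the simple roots indexed by a finite type 'n.
By Serre's theorem these are exactly the matrices below: positive definite, integral
Cartan numbers a_ij = 2 B_ij / B_ii which are non-positive off the diagonal, connected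
Dynkin diagram.  Normalisation: short roots have squared length 2 (so B is integral).\<close>

definition cartanM :: "('n \<Rightarrow> 'n \<Rightarrow> int) \<Rightarrow> 'n \<Rightarrow> 'n \<Rightarrow> real" where
  "cartanM B i j = 2 * real_of_int (B i j) / real_of_int (B i i)"

definition simple_lie_roots :: "('n::finite \<Rightarrow> 'n \<Rightarrow> int) \<Rightarrow> bool" where
  "simple_lie_roots B \<longleftrightarrow>
     (\<forall>i j. B i j = B j i)
   \<and> (\<forall>x :: 'n \<Rightarrow> real. x \<noteq> (\<lambda>_. 0) \<longrightarrow>
          (\<Sum>i\<in>UNIV. \<Sum>j\<in>UNIV. x i * real_of_int (B i j) * x j) > 0)
   \<and> (\<forall>i j. i \<noteq> j \<longrightarrow> B i j \<le> 0 \<and> B i i dvd 2 * B i j)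
   \<and> (\<forall>i j. (\<lambda>a b. a \<noteq> b \<and> B a b \<noteq> 0)\<^sup>*\<^sup>* i j)
   \<and> (\<forall>i. 2 \<le> B i i) \<and> (\<exists>i. B i i = 2)"

definition brCartan :: "('n \<Rightarrow> 'n \<Rightarrow> complex) \<Rightarrow> 'n \<Rightarrow> 'n \<Rightarrow> int option" where
  "brCartan q i j =
     (if i = j then Some 2
      else if (\<exists>k::nat. (\<Sum>t\<le>k. q i i ^ t) * (1 - q i i ^ k * q i j * q j i) = 0)
      then Some (- int (LEAST k::nat. (\<Sum>t\<le>k. q i i ^ t) * (1 - q i i ^ k * q i j * q j i) = 0))
      else None)"

text \<open>Reflection R^k: alpha_i \<mapsto> alpha_i - a_ki alpha_k, applied to a bilinear form m
and to a bicharacter q (both given by their values on simple roots).\<close>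

definition reflM :: "('n \<Rightarrow> 'n \<Rightarrow> int) \<Rightarrow> 'n \<Rightarrow> ('n \<Rightarrow> 'n \<Rightarrow> real) \<Rightarrow> 'n \<Rightarrow> 'n \<Rightarrow> real" where
  "reflM a k m i j = m i j - of_int (a k j) * m i k - of_int (a k i) * m k j
                     + of_int (a k i) * of_int (a k j) * m k k"

definition reflQ :: "('n \<Rightarrow> 'n \<Rightarrow> int) \<Rightarrow> 'n \<Rightarrow> ('n \<Rightarrow> 'n \<Rightarrow> complex) \<Rightarrow> 'n \<Rightarrow> 'n \<Rightarrow> complex" where
  "reflQ a k q i j = q i j * q i k powi (- a k j) * q k j powi (- a k i)
                     * q k k powi (a k i * a k j)"

inductive reach :: "('n \<Rightarrow> 'n \<Rightarrow> real) \<Rightarrow> ('n \<Rightarrow> 'n \<Rightarrow> complex)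
                    \<Rightarrow> ('n \<Rightarrow> 'n \<Rightarrow> real) \<Rightarrow> ('n \<Rightarrow> 'n \<Rightarrow> complex) \<Rightarrow> bool"
  for m0 q0 where
  reach_refl: "reach m0 q0 m0 q0"
| reach_step: "reach m0 q0 m q \<Longrightarrow> (\<forall>j. brCartan q k j \<noteq> None) \<Longrightarrow>
     reach m0 q0 (reflM (\<lambda>x y. the (brCartan q x y)) k m)
                 (reflQ (\<lambda>x y. the (brCartan q x y)) k q)"

definition realises :: "('n \<Rightarrow> 'n \<Rightarrow> real) \<Rightarrow> ('n \<Rightarrow> 'n \<Rightarrow> complex) \<Rightarrow> bool" where
  "realises m q \<longleftrightarrow>
     (\<forall>m' q'. reach m q m' q' \<longrightarrow>
        (\<forall>i j. exp (\<i> * complex_of_real (pi * m' i j)) = q' i j)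
      \<and> (\<forall>i j. i \<noteq> j \<longrightarrow> (\<exists>a. brCartan q' i j = Some a \<and>
             (2 * m' i j = of_int a * m' i i \<or> (1 - of_int a) * m' i i = 2))))"

definition primitive_root :: "complex \<Rightarrow> nat \<Rightarrow> bool" where
  "primitive_root z l \<longleftrightarrow> 0 < l \<and> z ^ l = 1 \<and> (\<forall>k. 0 < k \<and> k < l \<longrightarrow> z ^ k \<noteq> 1)"

end

theory Submission
  imports Defs
begin

lemma dvdL: fixes l b x :: int assumes "l > 0" "l dvd b * x" shows "(l div gcd l b) dvd x"
  by (smt (verit, best) assms(1,2) div_dvd_iff_mult division_decomp
    dvd_div_mult_self dvd_triv_left gcd_dvd1 gcd_greatest_iff mult_dvd_mono
    mult_eq_0_iff nonzero_mult_div_cancel_left)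

lemma powi1: fixes q :: complex
  assumes "primitive_root q l" "q powi z = 1"
  shows "int l dvd z"
proof -
  have l: "l > 0" "q ^ l = 1" "\<forall>k. 0 < k \<and> k < l \<longrightarrow> q ^ k \<noteq> 1"
    using assms(1) unfolding primitive_root_def by auto
  have q0: "q \<noteq> 0" using l by (metis power_0_left zero_neq_one gr_implies_not0)
  define r where "r = z mod int l"
  define s where "s = z div int l"
  have z: "z = int l * s + r" unfolding r_def s_def by simp
  have r: "0 \<le> r" "r < int l" using l unfolding r_def by auto
  have "q powi z = (q powi int l) powi s * q powi r" unfolding z using q0
    by (simp add: power_int_add power_int_mult)
  also have "\<dots> = q ^ nat r"
  proof -
    have "q powi r = q ^ nat r" using r(1) by (metis nat_0_le power_int_of_nat)
    moreover have "q powi int l = 1" using l(2) by (simp only: power_int_of_nat)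
    ultimately show ?thesis by simp
  qed
  finally have "q ^ nat r = 1" using assms(2) by simp
  hence "nat r = 0" using l r by (metis gr0I nat_less_iff)
  hence "r = 0" using r by simp
  thus ?thesis unfolding r_def by auto
qed

lemma part1:
  fixes B :: "'n::finite \<Rightarrow> 'n \<Rightarrow> int" and m :: "'n \<Rightarrow> 'n \<Rightarrow> real"
  assumes "simple_lie_roots B" "\<forall>i j. m i j = m j i"
    "\<forall>i j. i \<noteq> j \<longrightarrow> 2 * m i j = cartanM B i j * m i i"
  shows "\<exists>r. \<forall>i j. m i j = r * real_of_int (B i j)"
proof -
  from assms(1) have Bs: "\<And>i j. B i j = B j i"
    and conn: "\<And>i j. (\<lambda>a b. a \<noteq> b \<and> B a b \<noteq> 0)\<^sup>*\<^sup>* i j"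
    and Bd: "\<And>i. 2 \<le> B i i" unfolding simple_lie_roots_def by auto
  have off: "m i j = real_of_int (B i j) * (m i i / real_of_int (B i i))" if "i \<noteq> j" for i j
  proof -
    have p: "real_of_int (B i i) > 0" using Bd[of i] by simp
    have "2 * m i j = 2 * real_of_int (B i j) / real_of_int (B i i) * m i i"
      using assms(3) that unfolding cartanM_def by blast
    then show ?thesis using p by simp
  qed
  have edge: "m a a / B a a = m b b / B b b" if "a \<noteq> b" "B a b \<noteq> 0" for a b
  proof -
    have "real_of_int (B a b) * (m a a / B a a) = real_of_int (B a b) * (m b b / B b b)"
      using off[OF that(1)] off[of b a] that assms(2) Bs by metis
    moreover have "real_of_int (B a b) \<noteq> 0" using that(2) by simp
    ultimately show ?thesis by (metis mult_left_cancel)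
  qed
  have ratio: "m i i / B i i = m j j / B j j" for i j
    using conn[of i j]
  proof (induction rule: rtranclp_induct)
    case base then show ?case by simp
  next
    case (step y z) then show ?case using edge by metis
  qed
  define r where "r = m undefined undefined / B undefined undefined"
  show ?thesis
  proof (intro exI allI)
    fix i j
    show "m i j = r * B i j"
    proof (cases "i = j")
      case True
      have "real_of_int (B i i) \<noteq> 0" using Bd[of i] by simp
      then show ?thesis using True ratio[of i undefined] unfolding r_def by (simp add: field_simps)
    next
      case False
      then show ?thesis using off[OF False] ratio[of i undefined] unfolding r_def by simp
    qed
  qed
qed

lemma part2:
  fixes B :: "'n::finite \<Rightarrow> 'n \<Rightarrow> int" and m :: "'n \<Rightarrow> 'n \<Rightarrow> real"
  assumes "simple_lie_roots B" "primitive_root q l"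
    "\<forall>i j. i \<noteq> j \<longrightarrow> real_of_int (int l div gcd (int l) (B i i)) > 1 - cartanM B i j"
    "realises m (\<lambda>i j. q powi B i j)"
  shows "\<forall>i j. i \<noteq> j \<longrightarrow> 2 * m i j = cartanM B i j * m i i"
proof (intro allI impI)
  fix i j :: 'n
  assume ij: "i \<noteq> j"
  from assms(1) have Bs: "\<And>i j. B i j = B j i"
    and Bd: "\<And>i. 2 \<le> B i i" and BB: "\<forall>i j. i \<noteq> j \<longrightarrow> B i j \<le> 0 \<and> B i i dvd 2 * B i j"
    using conjunct1[OF assms(1)[unfolded simple_lie_roots_def]]
      conjunct1[OF conjunct2[OF conjunct2[OF conjunct2[OF conjunct2[OF assms(1)[unfolded simple_lie_roots_def]]]]]]
      conjunct1[OF conjunct2[OF conjunct2[OF assms(1)[unfolded simple_lie_roots_def]]]]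
    by simp_all
  have Bij: "B i j \<le> 0" and dv: "B i i dvd 2 * B i j" using BB ij by blast+
  have l0: "l > 0" using assms(2) unfolding primitive_root_def by auto
  have q0: "q \<noteq> 0" using assms(2) unfolding primitive_root_def
    by (metis power_0_left zero_neq_one gr_implies_not0)
  define c where "c = 2 * B i j div B i i"
  define L where "L = int l div gcd (int l) (B i i)"
  have c2: "2 * B i j = c * B i i" using dv unfolding c_def by simp
  have cart: "cartanM B i j = real_of_int c"
  proof -
    have "real_of_int (B i i) \<noteq> 0" using Bd[of i] by simp
    moreover have "real_of_int (2 * B i j) = real_of_int c * real_of_int (B i i)"
      using c2 by (metis of_int_mult)
    ultimately show ?thesis unfolding cartanM_def by (simp add: field_simps)
  qed
  have cle: "c \<le> 0"
  proof (rule ccontr)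
    assume "\<not> c \<le> 0"
    hence "c * B i i > 0" using Bd[of i] by simp
    thus False using c2 Bij by linarith
  qed
  have "real_of_int L > 1 - real_of_int c" using assms(3)[rule_format, OF ij] cart unfolding L_def by simp
  hence Lgt: "L > 1 - c" by linarith
  define K where "K = nat (- c)"
  have KC: "int K = - c" unfolding K_def using cle by simp
  have keyL: "L dvd x" if "q powi (B i i * x) = 1" for x
    using dvdL[of "int l" "B i i" x] powi1[OF assms(2) that] l0 unfolding L_def by simp
  have noL: False if "L dvd x" "x \<noteq> 0" "\<bar>x\<bar> < L" for x
    using dvd_imp_le_int[OF that(2,1)] that(3) by linarith
  define qq where "qq = (\<lambda>i j. q powi B i j)"
  have pw: "qq i i ^ k = q powi (B i i * int k)" for k
    unfolding qq_def by (simp add: power_int_mult)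
  have prodpow: "qq i i ^ k * qq i j * qq j i = q powi (B i i * (int k + c))" for k
  proof -
    have "qq i j * qq j i = q powi B i j * q powi B i j" unfolding qq_def by (simp only: Bs[of j i])
    also have "\<dots> = q powi (B i j + B i j)" by (simp only: power_int_add[OF disjI1[OF q0]])
    also have "B i j + B i j = c * B i i" using c2 by simp
    finally have "qq i j * qq j i = q powi (c * B i i)" .
    hence "qq i i ^ k * qq i j * qq j i = q powi (B i i * int k) * q powi (c * B i i)"
      using pw[of k] by (simp only: mult.assoc)
    also have "\<dots> = q powi (B i i * int k + c * B i i)" using q0
      by (simp only: power_int_add[OF disjI1[OF q0]])
    also have "B i i * int k + c * B i i = B i i * (int k + c)" by (simp add: algebra_simps)
    finally show ?thesis .
  qed
  define P where "P = (\<lambda>k::nat. (\<Sum>t\<le>k. qq i i ^ t) * (1 - qq i i ^ k * qq i j * qq j i) = 0)"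
  have PK: "P K" unfolding P_def prodpow KC by simp
  have notP: "\<not> P k" if "k < K" for k
  proof
    assume "P k"
    hence "(\<Sum>t\<le>k. qq i i ^ t) = 0 \<or> qq i i ^ k * qq i j * qq j i = 1" unfolding P_def by simp
    then show False
    proof
      assume s0: "(\<Sum>t\<le>k. qq i i ^ t) = 0"
      have "(\<Sum>t<Suc k. qq i i ^ t) = 0" using s0 lessThan_Suc_atMost by simp
      hence "qq i i ^ Suc k = 1"
      proof (cases "qq i i = 1")
        case True
        then have "(\<Sum>t<Suc k. qq i i ^ t) = of_nat (Suc k)" by simp
        with \<open>(\<Sum>t<Suc k. qq i i ^ t) = 0\<close> have "(of_nat (Suc k) :: complex) = 0" by simp
        then show ?thesis by (simp only: of_nat_eq_0_iff)
      next
        case False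
        then have "(\<Sum>t<Suc k. qq i i ^ t) = (1 - qq i i ^ Suc k) / (1 - qq i i)"
          by (simp only: sum_gp_strict if_False)
        with \<open>(\<Sum>t<Suc k. qq i i ^ t) = 0\<close> False show ?thesis by simp
      qed
      hence "q powi (B i i * int (Suc k)) = 1" by (metis pw)
      hence "L dvd int (Suc k)" by (rule keyL)
      thus False using noL[of "int (Suc k)"] that KC Lgt by simp
    next
      assume "qq i i ^ k * qq i j * qq j i = 1"
      hence "q powi (B i i * (int k + c)) = 1" by (metis prodpow)
      hence "L dvd (int k + c)" by (rule keyL)
      thus False using noL[of "int k + c"] that KC Lgt by simp
    qed
  qed
  have least: "(LEAST k. P k) = K"
    by (rule Least_equality[of P K, OF PK]) (meson notP not_le)
  have brC: "brCartan qq i j = Some c"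
    unfolding brCartan_def using ij PK least KC unfolding P_def by auto
  have R: "reach m qq m qq" by (rule reach_refl)
  from assms(4) R have ex: "\<forall>i j. exp (\<i> * complex_of_real (pi * m i j)) = qq i j"
    and ca: "\<exists>a. brCartan qq i j = Some a \<and>
             (2 * m i j = of_int a * m i i \<or> (1 - of_int a) * m i i = 2)"
    unfolding realises_def qq_def using ij by blast+
  from ca brC have AB: "2 * m i j = of_int c * m i i \<or> (1 - of_int c) * m i i = 2" by auto
  then show "2 * m i j = cartanM B i j * m i i"
  proof
    assume "2 * m i j = of_int c * m i i" thus ?thesis using cart by simp
  next
    assume B2: "(1 - of_int c) * m i i = 2"
    have "qq i i ^ Suc K = exp (\<i> * complex_of_real (pi * m i i)) ^ Suc K" using ex by simp
    also have "\<dots> = exp (of_nat (Suc K) * (\<i> * complex_of_real (pi * m i i)))"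
      by (rule exp_of_nat_mult[symmetric])
    also have "of_nat (Suc K) * (\<i> * complex_of_real (pi * m i i)) = \<i> * (of_real pi * 2)"
    proof -
      have "real (Suc K) = 1 - of_int c" using KC by simp
      hence "real (Suc K) * m i i = 2" using B2 by simp
      hence "complex_of_real (real (Suc K) * m i i) = 2" by simp
      thus ?thesis by (simp add: algebra_simps)
    qed
    finally have "qq i i ^ Suc K = 1" by simp
    hence "q powi (B i i * int (Suc K)) = 1" by (metis pw)
    hence "L dvd int (Suc K)" by (rule keyL)
    hence False using noL[of "int (Suc K)"] KC Lgt by simp
    thus ?thesis ..
  qed
qed

theorem mainTheorem4:
  fixes B :: "'n::finite \<Rightarrow> 'n \<Rightarrow> int"
  assumes "simple_lie_roots B"
  shows "(\<forall>m :: 'n \<Rightarrow> 'n \<Rightarrow> real.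
            (\<forall>i j. m i j = m j i) \<and> (\<forall>i j. i \<noteq> j \<longrightarrow> 2 * m i j = cartanM B i j * m i i)
            \<longrightarrow> (\<exists>r::real. \<forall>i j. m i j = r * real_of_int (B i j)))
       \<and> (\<forall>(q::complex) (l::nat) (m :: 'n \<Rightarrow> 'n \<Rightarrow> real).
            primitive_root q l
            \<and> (\<forall>i j. i \<noteq> j \<longrightarrow>
                 real_of_int (int l div gcd (int l) (B i i)) > 1 - cartanM B i j)
            \<and> (\<forall>i j. m i j = m j i)
            \<and> realises m (\<lambda>i j. q powi B i j)
            \<longrightarrow> (\<exists>r::real. \<forall>i j. m i j = r * real_of_int (B i j)))"
proof (intro conjI allI impI)
  fix m :: "'n \<Rightarrow> 'n \<Rightarrow> real"
  assume "(\<forall>i j. m i j = m j i) \<and> (\<forall>i j. i \<noteq> j \<longrightarrow> 2 * m i j = cartanM B i j * m i i)"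
  then show "\<exists>r::real. \<forall>i j. m i j = r * real_of_int (B i j)"
    using part1[OF assms] by blast
next
  fix q :: complex and l :: nat and m :: "'n \<Rightarrow> 'n \<Rightarrow> real"
  assume h: "primitive_root q l
            \<and> (\<forall>i j. i \<noteq> j \<longrightarrow>
                 real_of_int (int l div gcd (int l) (B i i)) > 1 - cartanM B i j)
            \<and> (\<forall>i j. m i j = m j i)
            \<and> realises m (\<lambda>i j. q powi B i j)"
  then have "\<forall>i j. i \<noteq> j \<longrightarrow> 2 * m i j = cartanM B i j * m i i"
    using part2[OF assms, of q l m] by blast
  then show "\<exists>r::real. \<forall>i j. m i j = r * real_of_int (B i j)"
    using part1[OF assms, of m] h by blast
qed

end
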